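(* Let $H=kQ_H$ be a representation-finite hereditary (path) algebra over an algebraically closed field $k$, and let $f\colon X\to Y$ be a non-zero morphism between projective $H$-modules. Then there exist a sink $i$ and a source $j$ of $Q_H$ and morphisms $\alpha\colon P_i\to X$, $\beta\colon Y\to P_j$ such that $\beta f\alpha$ is a non-zero monomorphism.
   Context: $P_a$ denotes the indecomposable projective right $H$-module corresponding to the vertex $a$ of $Q_H$. A sink is a vertex with no outgoing arrows; a source is a vertex with no incoming arrows. *)

theory Defs
  imports "Jordan_Normal_Form.Matrix" "HOL-Computational_Algebra.Polynomial"
begin

definition alg_closed :: "'k::field itself \<Rightarrow> bool" where
  "alg_closed _ \<longleftrightarrow> (\<forall>p :: 'k poly. degree p > 0 \<longrightarrow> (\<exists>x. poly p x = 0))"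

record ('v,'e) quiver =
  verts :: "'v set"
  arrs :: "'e set"
  src :: "'e \<Rightarrow> 'v"
  tgt :: "'e \<Rightarrow> 'v"

definition finite_quiver :: "('v,'e) quiver \<Rightarrow> bool" where
  "finite_quiver Q \<longleftrightarrow> finite (verts Q) \<and> finite (arrs Q) \<and>
     (\<forall>e\<in>arrs Q. src Q e \<in> verts Q \<and> tgt Q e \<in> verts Q)"

text \<open>Paths from a to b, written as lists of arrows in the order they are traversed
  (concatenation left to right). The empty path is the trivial path at a.\<close>
definition is_path :: "('v,'e) quiver \<Rightarrow> 'v \<Rightarrow> 'v \<Rightarrow> 'e list \<Rightarrow> bool" where
  "is_path Q a b p \<longleftrightarrow> a \<in> verts Q \<and> b \<in> verts Q \<and> set p \<subseteq> arrs Q \<and>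
     (if p = [] then b = a
      else src Q (hd p) = a \<and> tgt Q (last p) = b \<and>
           (\<forall>i. Suc i < length p \<longrightarrow> tgt Q (p ! i) = src Q (p ! Suc i)))"

definition paths :: "('v,'e) quiver \<Rightarrow> 'v \<Rightarrow> 'v \<Rightarrow> 'e list set" where
  "paths Q a b = {p. is_path Q a b p}"

definition acyclic_quiver :: "('v,'e) quiver \<Rightarrow> bool" where
  "acyclic_quiver Q \<longleftrightarrow> (\<forall>a p. is_path Q a a p \<longrightarrow> p = [])"

definition sink :: "('v,'e) quiver \<Rightarrow> 'v \<Rightarrow> bool" where
  "sink Q i \<longleftrightarrow> i \<in> verts Q \<and> \<not> (\<exists>e\<in>arrs Q. src Q e = i)"

definition source :: "('v,'e) quiver \<Rightarrow> 'v \<Rightarrow> bool" where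
  "source Q j \<longleftrightarrow> j \<in> verts Q \<and> \<not> (\<exists>e\<in>arrs Q. tgt Q e = j)"

text \<open>Finite-dimensional right kQ-modules, as representations of Q: a space k^(dim a) at each
  vertex a, and for an arrow e : a \<rightarrow> b the matrix of right multiplication by e,
  a linear map k^(dim a) \<rightarrow> k^(dim b) (acting on column vectors).\<close>
record ('v,'e,'k) rep =
  dimv :: "'v \<Rightarrow> nat"
  mp :: "'e \<Rightarrow> 'k mat"

definition is_rep :: "('v,'e) quiver \<Rightarrow> ('v,'e,'k) rep \<Rightarrow> bool" where
  "is_rep Q M \<longleftrightarrow> (\<forall>e\<in>arrs Q. mp M e \<in> carrier_mat (dimv M (tgt Q e)) (dimv M (src Q e)))"

definition hom :: "('v,'e) quiver \<Rightarrow> ('v,'e,'k::field) rep \<Rightarrow> ('v,'e,'k) rep \<Rightarrow> ('v \<Rightarrow> 'k mat) \<Rightarrow> bool" where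
  "hom Q M N f \<longleftrightarrow> is_rep Q M \<and> is_rep Q N \<and>
     (\<forall>a\<in>verts Q. f a \<in> carrier_mat (dimv N a) (dimv M a)) \<and>
     (\<forall>e\<in>arrs Q. f (tgt Q e) * mp M e = mp N e * f (src Q e))"

definition comp_hom :: "('v \<Rightarrow> 'k::field mat) \<Rightarrow> ('v \<Rightarrow> 'k mat) \<Rightarrow> ('v \<Rightarrow> 'k mat)" where
  "comp_hom g f = (\<lambda>a. g a * f a)"

definition nonzero_hom :: "('v,'e) quiver \<Rightarrow> ('v,'e,'k::field) rep \<Rightarrow> ('v,'e,'k) rep \<Rightarrow> ('v \<Rightarrow> 'k mat) \<Rightarrow> bool" where
  "nonzero_hom Q M N f \<longleftrightarrow> (\<exists>a\<in>verts Q. f a \<noteq> 0\<^sub>m (dimv N a) (dimv M a))"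

definition mono_hom :: "('v,'e) quiver \<Rightarrow> ('v,'e,'k::field) rep \<Rightarrow> ('v,'e,'k) rep \<Rightarrow> ('v \<Rightarrow> 'k mat) \<Rightarrow> bool" where
  "mono_hom Q M N f \<longleftrightarrow> hom Q M N f \<and>
     (\<forall>a\<in>verts Q. \<forall>v\<in>carrier_vec (dimv M a). f a *\<^sub>v v = 0\<^sub>v (dimv N a) \<longrightarrow> v = 0\<^sub>v (dimv M a))"

definition epi_hom :: "('v,'e) quiver \<Rightarrow> ('v,'e,'k::field) rep \<Rightarrow> ('v,'e,'k) rep \<Rightarrow> ('v \<Rightarrow> 'k mat) \<Rightarrow> bool" where
  "epi_hom Q M N f \<longleftrightarrow> hom Q M N f \<and>
     (\<forall>a\<in>verts Q. \<forall>w\<in>carrier_vec (dimv N a). \<exists>v\<in>carrier_vec (dimv M a). f a *\<^sub>v v = w)"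

definition projective :: "('v,'e) quiver \<Rightarrow> ('v,'e,'k::field) rep \<Rightarrow> bool" where
  "projective Q P \<longleftrightarrow> is_rep Q P \<and>
     (\<forall>(M::('v,'e,'k) rep) N g h. epi_hom Q M N g \<longrightarrow> hom Q P N h \<longrightarrow>
        (\<exists>l. hom Q P M l \<and> (\<forall>a\<in>verts Q. g a * l a = h a)))"

definition iso_rep :: "('v,'e) quiver \<Rightarrow> ('v,'e,'k::field) rep \<Rightarrow> ('v,'e,'k) rep \<Rightarrow> bool" where
  "iso_rep Q M N \<longleftrightarrow> (\<exists>f g. hom Q M N f \<and> hom Q N M g \<and>
     (\<forall>a\<in>verts Q. g a * f a = 1\<^sub>m (dimv M a) \<and> f a * g a = 1\<^sub>m (dimv N a)))"

definition zero_rep :: "('v,'e) quiver \<Rightarrow> ('v,'e,'k) rep \<Rightarrow> bool" where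
  "zero_rep Q M \<longleftrightarrow> (\<forall>a\<in>verts Q. dimv M a = 0)"

definition dsum_rep :: "('v,'e) quiver \<Rightarrow> ('v,'e,'k::field) rep \<Rightarrow> ('v,'e,'k) rep \<Rightarrow> ('v,'e,'k) rep" where
  "dsum_rep Q M N = \<lparr> dimv = (\<lambda>a. dimv M a + dimv N a),
     mp = (\<lambda>e. four_block_mat (mp M e) (0\<^sub>m (dimv M (tgt Q e)) (dimv N (src Q e)))
                               (0\<^sub>m (dimv N (tgt Q e)) (dimv M (src Q e))) (mp N e)) \<rparr>"

definition indecomposable :: "('v,'e) quiver \<Rightarrow> ('v,'e,'k::field) rep \<Rightarrow> bool" where
  "indecomposable Q M \<longleftrightarrow> is_rep Q M \<and> \<not> zero_rep Q M \<and>
     (\<forall>M1 M2. is_rep Q M1 \<longrightarrow> is_rep Q M2 \<longrightarrow> iso_rep Q M (dsum_rep Q M1 M2) \<longrightarrow>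
        zero_rep Q M1 \<or> zero_rep Q M2)"

definition rep_finite :: "'k::field itself \<Rightarrow> ('v,'e) quiver \<Rightarrow> bool" where
  "rep_finite _ Q \<longleftrightarrow> (\<exists>S :: ('v,'e,'k) rep set. finite S \<and>
     (\<forall>M. indecomposable Q M \<longrightarrow> (\<exists>N\<in>S. iso_rep Q M N)))"

text \<open>The indecomposable projective right module P_a = e_a kQ: at vertex b it has basis
  the paths from a to b; an arrow e acts by p \<mapsto> p e.\<close>
definition path_enum :: "('v,'e) quiver \<Rightarrow> 'v \<Rightarrow> 'v \<Rightarrow> 'e list list" where
  "path_enum Q a b = (SOME l. distinct l \<and> set l = paths Q a b)"

definition proj_rep :: "('v,'e) quiver \<Rightarrow> 'v \<Rightarrow> ('v,'e,'k::field) rep" where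
  "proj_rep Q a = \<lparr> dimv = (\<lambda>b. length (path_enum Q a b)),
     mp = (\<lambda>e. mat (length (path_enum Q a (tgt Q e))) (length (path_enum Q a (src Q e)))
            (\<lambda>(i,j). if path_enum Q a (tgt Q e) ! i = path_enum Q a (src Q e) ! j @ [e] then 1 else 0)) \<rparr>"

end

theory Submission
  imports Defs
begin


lemma path_nil: "is_path Q a b [] \<longleftrightarrow> a \<in> verts Q \<and> b = a"
  unfolding is_path_def by auto

lemma path_snoc:
  assumes fq: "finite_quiver Q" and p: "is_path Q a b p" and e: "e \<in> arrs Q" "src Q e = b"
  shows "is_path Q a (tgt Q e) (p @ [e])"
proof -
  have tv: "tgt Q e \<in> verts Q" using fq e unfolding finite_quiver_def by auto
  show ?thesis
  proof (cases "p = []")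
    case True then show ?thesis using p e tv unfolding is_path_def by auto
  next
    case False
    have "\<forall>i. Suc i < length (p @ [e]) \<longrightarrow> tgt Q ((p@[e]) ! i) = src Q ((p@[e]) ! Suc i)"
    proof (intro allI impI)
      fix i assume i: "Suc i < length (p @ [e])"
      show "tgt Q ((p@[e]) ! i) = src Q ((p@[e]) ! Suc i)"
      proof (cases "Suc i < length p")
        case True then show ?thesis using p False by (auto simp: is_path_def nth_append)
      next
        case F: False
        then have "i = length p - 1" using i by auto
        then show ?thesis using p False e F i by (auto simp: is_path_def nth_append last_conv_nth)
      qed
    qed
    then show ?thesis using p e tv False unfolding is_path_def by auto
  qed
qed

lemma path_snoc_inv:
  assumes fq: "finite_quiver Q" and p: "is_path Q a c (q @ [e])"
  shows "is_path Q a (src Q e) q \<and> e \<in> arrs Q \<and> c = tgt Q e"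
proof -
  have e: "e \<in> arrs Q" using p unfolding is_path_def by auto
  have sv: "src Q e \<in> verts Q" using fq e unfolding finite_quiver_def by auto
  have c: "c = tgt Q e" using p unfolding is_path_def by auto
  have "is_path Q a (src Q e) q"
  proof (cases "q = []")
    case True then show ?thesis using p unfolding is_path_def by auto
  next
    case False
    have l: "tgt Q (last q) = src Q e"
      using p False unfolding is_path_def
      apply (auto simp: nth_append last_conv_nth)
      done
    have "\<forall>i. Suc i < length q \<longrightarrow> tgt Q (q ! i) = src Q (q ! Suc i)"
    proof (intro allI impI)
      fix i assume i: "Suc i < length q"
      then show "tgt Q (q ! i) = src Q (q ! Suc i)"
        using p unfolding is_path_def by (auto simp: nth_append)
    qed
    then show ?thesis using p False l sv unfolding is_path_def by (auto simp: hd_append)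
  qed
  then show ?thesis using e c by auto
qed

lemma path_append:
  assumes fq: "finite_quiver Q" and p: "is_path Q a b p"
  shows "is_path Q b c q \<Longrightarrow> is_path Q a c (p @ q)"
proof (induction q arbitrary: c rule: rev_induct)
  case Nil then show ?case using p by (auto simp: path_nil)
next
  case (snoc e q)
  from path_snoc_inv[OF fq snoc.prems] have h: "is_path Q b (src Q e) q" "e \<in> arrs Q" "c = tgt Q e" by auto
  from snoc.IH[OF h(1)] have "is_path Q a (src Q e) (p @ q)" .
  from path_snoc[OF fq this h(2)] h(3) show ?case by simp
qed

lemma path_single:
  assumes fq: "finite_quiver Q" and e: "e \<in> arrs Q"
  shows "is_path Q (src Q e) (tgt Q e) [e]"
proof -
  have "src Q e \<in> verts Q" using fq e unfolding finite_quiver_def by auto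
  then have "is_path Q (src Q e) (src Q e) []" by (simp add: path_nil)
  from path_snoc[OF fq this e] show ?thesis by simp
qed

lemma path_sink:
  assumes "sink Q i" "is_path Q i b p" shows "p = [] \<and> b = i"
  using assms unfolding sink_def is_path_def
  by (cases p) auto

lemma path_verts: "is_path Q a b p \<Longrightarrow> a \<in> verts Q \<and> b \<in> verts Q"
  unfolding is_path_def by auto

definition arel :: "('v,'e) quiver \<Rightarrow> ('v \<times> 'v) set" where
  "arel Q = (\<lambda>e. (src Q e, tgt Q e)) ` arrs Q"

lemma arel_trancl_path:
  assumes fq: "finite_quiver Q" and "(a,b) \<in> (arel Q)\<^sup>+"
  shows "\<exists>p. p \<noteq> [] \<and> is_path Q a b p"
  using assms(2)
proof (induction rule: trancl_induct)
  case (base y)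
  then obtain e where "e \<in> arrs Q" "src Q e = a" "tgt Q e = y" unfolding arel_def by auto
  then show ?case using path_single[OF fq] by blast
next
  case (step y z)
  then obtain e where e: "e \<in> arrs Q" "src Q e = y" "tgt Q e = z" unfolding arel_def by auto
  obtain p where "is_path Q a y p" using step by auto
  from path_snoc[OF fq this e(1,2)] e(3) show ?case by auto
qed

lemma arel_wf:
  assumes fq: "finite_quiver Q" and ac: "acyclic_quiver Q"
  shows "wf (arel Q)" "wf ((arel Q)\<inverse>)"
proof -
  have fin: "finite (arel Q)" using fq unfolding finite_quiver_def arel_def by auto
  have "acyclic (arel Q)"
    unfolding acyclic_def
  proof
    fix x show "(x,x) \<notin> (arel Q)\<^sup>+"
      using arel_trancl_path[OF fq, of x x] ac unfolding acyclic_quiver_def by auto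
  qed
  then show "wf (arel Q)" "wf ((arel Q)\<inverse>)"
    using fin finite_acyclic_wf finite_acyclic_wf_converse by auto
qed

lemma source_exists:
  assumes fq: "finite_quiver Q" and ac: "acyclic_quiver Q"
  shows "b \<in> verts Q \<Longrightarrow> \<exists>s q. source Q s \<and> is_path Q s b q"
proof (induction b rule: wf_induct_rule[OF arel_wf(1)[OF fq ac]])
  case (1 b)
  show ?case
  proof (cases "source Q b")
    case True then have "is_path Q b b []" using 1 by (simp add: path_nil)
    then show ?thesis using True by blast
  next
    case False
    then obtain e where e: "e \<in> arrs Q" "tgt Q e = b" using 1 unfolding source_def by auto
    have "(src Q e, b) \<in> arel Q" using e unfolding arel_def by auto
    moreover have "src Q e \<in> verts Q" using fq e unfolding finite_quiver_def by auto
    ultimately obtain s q where "source Q s" "is_path Q s (src Q e) q" using 1 by blast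
    with path_snoc[OF fq this(2) e(1)] e show ?thesis by auto
  qed
qed

definition paths_to :: "('v,'e) quiver \<Rightarrow> 'v \<Rightarrow> 'e list set" where
  "paths_to Q b = {p. \<exists>a. is_path Q a b p}"

lemma paths_to_finite:
  assumes fq: "finite_quiver Q" and ac: "acyclic_quiver Q"
  shows "finite (paths_to Q b)"
proof (induction b rule: wf_induct_rule[OF arel_wf(1)[OF fq ac]])
  case (1 b)
  have "paths_to Q b \<subseteq> {[]} \<union> (\<Union>e\<in>{e\<in>arrs Q. tgt Q e = b}. (\<lambda>p. p @ [e]) ` paths_to Q (src Q e))"
  proof
    fix p assume "p \<in> paths_to Q b"
    then obtain a where pa: "is_path Q a b p" unfolding paths_to_def by auto
    show "p \<in> {[]} \<union> (\<Union>e\<in>{e\<in>arrs Q. tgt Q e = b}. (\<lambda>p. p @ [e]) ` paths_to Q (src Q e))"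
    proof (cases p rule: rev_cases)
      case Nil then show ?thesis by auto
    next
      case (snoc q e)
      from path_snoc_inv[OF fq pa[unfolded snoc]] show ?thesis unfolding snoc paths_to_def by auto
    qed
  qed
  moreover have "finite {e\<in>arrs Q. tgt Q e = b}" using fq unfolding finite_quiver_def by auto
  moreover have "\<forall>e\<in>{e\<in>arrs Q. tgt Q e = b}. finite (paths_to Q (src Q e))"
    using 1 unfolding arel_def by auto
  ultimately show ?case by (meson finite.emptyI finite.insertI finite_UN_I finite_Un finite_imageI finite_subset)
qed

lemma paths_finite:
  assumes fq: "finite_quiver Q" and ac: "acyclic_quiver Q"
  shows "finite (paths Q a b)"
  using paths_to_finite[OF fq ac, of b] unfolding paths_def paths_to_def
  by (rule finite_subset[rotated]) auto



definition enum :: "'b set \<Rightarrow> 'b list" where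
  "enum S = (SOME l. distinct l \<and> set l = S)"

definition ix :: "'b set \<Rightarrow> 'b \<Rightarrow> nat" where
  "ix S x = (THE i. i < length (enum S) \<and> enum S ! i = x)"

lemma enum_props: assumes "finite S" shows "distinct (enum S) \<and> set (enum S) = S"
proof -
  obtain l where "distinct l \<and> set l = S" using finite_distinct_list[OF assms] by blast
  then show ?thesis unfolding enum_def by (rule someI)
qed

lemma ix_props:
  assumes "finite S" "x \<in> S"
  shows "ix S x < length (enum S) \<and> enum S ! ix S x = x"
proof -
  have d: "distinct (enum S)" and s: "set (enum S) = S" using enum_props[OF assms(1)] by auto
  have "\<exists>!i. i < length (enum S) \<and> enum S ! i = x"
    using distinct_Ex1[OF d, of x] s assms(2) by auto
  then show ?thesis unfolding ix_def by (rule theI')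
qed

lemma enum_nth_eq:
  assumes "finite S" "t < length (enum S)"
  shows "enum S ! t = x \<longleftrightarrow> x \<in> S \<and> t = ix S x"
proof
  assume h: "enum S ! t = x"
  have d: "distinct (enum S)" and s: "set (enum S) = S" using enum_props[OF assms(1)] by auto
  have xs: "x \<in> S" using h assms(2) s nth_mem by blast
  from ix_props[OF assms(1) xs] have "ix S x < length (enum S)" "enum S ! ix S x = x" by auto
  with h assms(2) d have "t = ix S x" using nth_eq_iff_index_eq by metis
  then show "x \<in> S \<and> t = ix S x" using xs by auto
next
  assume "x \<in> S \<and> t = ix S x" then show "enum S ! t = x" using ix_props[OF assms(1)] by auto
qed

lemma enum_mem: "finite S \<Longrightarrow> t < length (enum S) \<Longrightarrow> enum S ! t \<in> S"
  using enum_props nth_mem by blast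

lemma sum_enum_delta:
  assumes "finite S"
  shows "(\<Sum>t\<in>{0..<length (enum S)}. if enum S ! t = z then c t else 0) = (if z \<in> S then c (ix S z) else 0)"
proof -
  have "(\<Sum>t\<in>{0..<length (enum S)}. if enum S ! t = z then c t else 0)
      = (\<Sum>t\<in>{0..<length (enum S)}. if t = ix S z then (if z \<in> S then c t else 0) else 0)"
    by (rule sum.cong) (auto simp: enum_nth_eq[OF assms])
  also have "\<dots> = (if z \<in> S then c (ix S z) else 0)"
    using ix_props[OF assms] by (auto simp: sum.delta')
  finally show ?thesis .
qed



definition srep :: "('v,'e) quiver \<Rightarrow> ('v \<Rightarrow> 'b set) \<Rightarrow> ('e \<Rightarrow> 'b \<Rightarrow> 'b) \<Rightarrow> ('v,'e,'k::field) rep" where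
  "srep Q B \<sigma> = \<lparr> dimv = (\<lambda>a. length (enum (B a))),
     mp = (\<lambda>e. mat (length (enum (B (tgt Q e)))) (length (enum (B (src Q e))))
            (\<lambda>(i,j). if enum (B (tgt Q e)) ! i = \<sigma> e (enum (B (src Q e)) ! j) then 1 else 0)) \<rparr>"

lemma proj_rep_srep: "proj_rep Q a = srep Q (paths Q a) (\<lambda>e p. p @ [e])"
  unfolding proj_rep_def srep_def path_enum_def enum_def by simp

lemma srep_dimv[simp]: "dimv (srep Q B \<sigma>) a = length (enum (B a))"
  unfolding srep_def by simp

lemma srep_is_rep: "is_rep Q (srep Q B \<sigma>)"
  unfolding is_rep_def srep_def by simp

locale srep_ok =
  fixes Q :: "('v,'e) quiver" and B :: "'v \<Rightarrow> 'b set" and \<sigma> :: "'e \<Rightarrow> 'b \<Rightarrow> 'b"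
  assumes fq: "finite_quiver Q"
    and finB: "\<And>a. a \<in> verts Q \<Longrightarrow> finite (B a)"
    and maps: "\<And>e x. e \<in> arrs Q \<Longrightarrow> x \<in> B (src Q e) \<Longrightarrow> \<sigma> e x \<in> B (tgt Q e)"
begin

lemma st: "e \<in> arrs Q \<Longrightarrow> src Q e \<in> verts Q \<and> tgt Q e \<in> verts Q"
  using fq unfolding finite_quiver_def by auto

lemma mp_entry:
  assumes e: "e \<in> arrs Q" and i: "i < length (enum (B (tgt Q e)))" and j: "j < length (enum (B (src Q e)))"
  shows "mp (srep Q B \<sigma> :: (_,_,'k::field) rep) e $$ (i,j) =
     (if enum (B (tgt Q e)) ! i = \<sigma> e (enum (B (src Q e)) ! j) then 1 else 0)"
  using i j unfolding srep_def by simp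

lemma mp_carrier: "mp (srep Q B \<sigma> :: (_,_,'k::field) rep) e \<in>
   carrier_mat (length (enum (B (tgt Q e)))) (length (enum (B (src Q e))))"
  unfolding srep_def by simp


end

context srep_ok begin
lemma col_mp:
  assumes e: "e \<in> arrs Q" and t: "t < length (enum (B (src Q e)))"
  shows "col (mp (srep Q B \<sigma> :: (_,_,'k::field) rep) e) t =
     unit_vec (length (enum (B (tgt Q e)))) (ix (B (tgt Q e)) (\<sigma> e (enum (B (src Q e)) ! t)))"
proof -
  have fs: "finite (B (src Q e))" "finite (B (tgt Q e))" using finB st e by auto
  have m: "\<sigma> e (enum (B (src Q e)) ! t) \<in> B (tgt Q e)" using maps[OF e enum_mem[OF fs(1) t]] .
  show ?thesis
    unfolding srep_def using t
    by (auto simp: unit_vec_def enum_nth_eq[OF fs(2)] m)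
qed


end

context srep_ok begin
lemma mult_mp_entry:
  assumes e: "e \<in> arrs Q" and A: "A \<in> carrier_mat n (length (enum (B (tgt Q e))))"
    and r: "r < n" and t: "t < length (enum (B (src Q e)))"
  shows "(A * mp (srep Q B \<sigma> :: (_,_,'k::field) rep) e) $$ (r,t) =
     A $$ (r, ix (B (tgt Q e)) (\<sigma> e (enum (B (src Q e)) ! t)))"
proof -
  have fs: "finite (B (src Q e))" "finite (B (tgt Q e))" using finB st e by auto
  have m: "\<sigma> e (enum (B (src Q e)) ! t) \<in> B (tgt Q e)" using maps[OF e enum_mem[OF fs(1) t]] .
  have "(A * mp (srep Q B \<sigma> :: (_,_,'k::field) rep) e) $$ (r,t) = row A r \<bullet> col (mp (srep Q B \<sigma> :: (_,_,'k::field) rep) e) t"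
    by (rule index_mult_mat(1)) (use A r t in \<open>auto simp: srep_def\<close>)
  also have "\<dots> = row A r $ ix (B (tgt Q e)) (\<sigma> e (enum (B (src Q e)) ! t))"
    unfolding col_mp[OF e t] using ix_props[OF fs(2) m] by simp
  also have "\<dots> = A $$ (r, ix (B (tgt Q e)) (\<sigma> e (enum (B (src Q e)) ! t)))"
    using A r ix_props[OF fs(2) m] by simp
  finally show ?thesis .
qed

end




lemma mat_vec_entry:
  assumes "M \<in> carrier_mat n m" "v \<in> carrier_vec m" "i < n"
  shows "(M *\<^sub>v v) $ i = (\<Sum>u\<in>{0..<m}. M $$ (i,u) * v $ u)"
  using assms by (simp add: scalar_prod_def)

locale srep_inj = srep_ok +
  assumes inj: "\<And>e. e \<in> arrs Q \<Longrightarrow> inj_on (\<sigma> e) (B (src Q e))"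
begin

lemma mp_apply_ix:
  assumes e: "e \<in> arrs Q" and v: "v \<in> carrier_vec (length (enum (B (src Q e))))"
    and j: "j < length (enum (B (src Q e)))"
  shows "(mp (srep Q B \<sigma> :: (_,_,'k::field) rep) e *\<^sub>v v) $ ix (B (tgt Q e)) (\<sigma> e (enum (B (src Q e)) ! j)) = v $ j"
proof -
  let ?S = "B (src Q e)" and ?T = "B (tgt Q e)"
  let ?M = "mp (srep Q B \<sigma> :: (_,_,'k::field) rep) e"
  have fs: "finite ?S" "finite ?T" using finB st e by auto
  have xj: "enum ?S ! j \<in> ?S" using enum_mem[OF fs(1) j] .
  have m: "\<sigma> e (enum ?S ! j) \<in> ?T" using maps[OF e xj] .
  note ixp = ix_props[OF fs(2) m]
  have "(?M *\<^sub>v v) $ ix ?T (\<sigma> e (enum ?S ! j))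
     = (\<Sum>u\<in>{0..<length (enum ?S)}. ?M $$ (ix ?T (\<sigma> e (enum ?S ! j)), u) * v $ u)"
    by (rule mat_vec_entry[OF mp_carrier v]) (use ixp in blast)
  also have "\<dots> = (\<Sum>u\<in>{0..<length (enum ?S)}. if enum ?S ! u = enum ?S ! j then v $ u else 0)"
  proof (rule sum.cong)
    fix u assume u: "u \<in> {0..<length (enum ?S)}"
    have uS: "enum ?S ! u \<in> ?S" using enum_mem[OF fs(1)] u by simp
    have eq: "\<sigma> e (enum ?S ! j) = \<sigma> e (enum ?S ! u) \<longleftrightarrow> enum ?S ! u = enum ?S ! j"
    proof
      assume h: "\<sigma> e (enum ?S ! j) = \<sigma> e (enum ?S ! u)"
      show "enum ?S ! u = enum ?S ! j" using inj_onD[OF inj[OF e] h[symmetric] uS xj] .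
    qed simp
    have "?M $$ (ix ?T (\<sigma> e (enum ?S ! j)), u) = (if enum ?T ! ix ?T (\<sigma> e (enum ?S ! j)) = \<sigma> e (enum ?S ! u) then 1 else 0)"
      by (rule mp_entry[OF e]) (use ixp in simp, use u in simp)
    then show "?M $$ (ix ?T (\<sigma> e (enum ?S ! j)), u) * v $ u
      = (if enum ?S ! u = enum ?S ! j then v $ u else 0)" using ixp eq by simp
  qed simp
  also have "\<dots> = v $ ix ?S (enum ?S ! j)"
    using sum_enum_delta[OF fs(1), of "enum ?S ! j" "\<lambda>u. v $ u"] xj by simp
  also have "ix ?S (enum ?S ! j) = j" using enum_nth_eq[OF fs(1) j, of "enum ?S ! j"] by simp
  finally show ?thesis .
qed

lemma mp_inj:
  assumes e: "e \<in> arrs Q" and v: "v \<in> carrier_vec (length (enum (B (src Q e))))"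
    and z: "mp (srep Q B \<sigma> :: (_,_,'k::field) rep) e *\<^sub>v v = 0\<^sub>v (length (enum (B (tgt Q e))))"
  shows "v = 0\<^sub>v (length (enum (B (src Q e))))"
proof (rule eq_vecI)
  let ?S = "B (src Q e)" and ?T = "B (tgt Q e)"
  have fs: "finite ?S" "finite ?T" using finB st e by auto
  fix j assume "j < dim_vec (0\<^sub>v (length (enum ?S)) :: 'k vec)"
  then have j: "j < length (enum ?S)" by simp
  have m: "\<sigma> e (enum ?S ! j) \<in> ?T" using maps[OF e enum_mem[OF fs(1) j]] .
  have "v $ j = (mp (srep Q B \<sigma> :: (_,_,'k::field) rep) e *\<^sub>v v) $ ix ?T (\<sigma> e (enum ?S ! j))"
    using mp_apply_ix[OF e v j] by simp
  also have "\<dots> = 0" using z ix_props[OF fs(2) m] by simp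
  finally show "v $ j = 0\<^sub>v (length (enum ?S)) $ j" using j by simp
qed (use v in simp)

end



lemma mat_mult_entry:
  assumes "A \<in> carrier_mat n m" "B \<in> carrier_mat m p" "r < n" "t < p"
  shows "(A * B) $$ (r,t) = (\<Sum>u\<in>{0..<m}. A $$ (r,u) * B $$ (u,t))"
  using assms by (simp add: scalar_prod_def)

lemma mat_mult_entry_col:
  assumes "A \<in> carrier_mat n m" "B \<in> carrier_mat m p" "r < n" "t < p"
  shows "(A * B) $$ (r,t) = (A *\<^sub>v col B t) $ r"
  using assms by simp

lemma hom_comp:
  assumes fq: "finite_quiver Q" and f: "hom Q M N f" and g: "hom Q N K g"
  shows "hom Q M K (comp_hom g f)"
  unfolding hom_def comp_hom_def
proof (intro conjI ballI)
  show "is_rep Q M" "is_rep Q K" using f g unfolding hom_def by auto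
  fix a assume "a \<in> verts Q"
  then show "g a * f a \<in> carrier_mat (dimv K a) (dimv M a)" using f g unfolding hom_def by auto
next
  fix e assume e: "e \<in> arrs Q"
  let ?s = "src Q e" and ?t = "tgt Q e"
  have v: "?s \<in> verts Q" "?t \<in> verts Q" using fq e unfolding finite_quiver_def by auto
  have c: "f ?s \<in> carrier_mat (dimv N ?s) (dimv M ?s)" "f ?t \<in> carrier_mat (dimv N ?t) (dimv M ?t)"
     "g ?s \<in> carrier_mat (dimv K ?s) (dimv N ?s)" "g ?t \<in> carrier_mat (dimv K ?t) (dimv N ?t)"
     "mp M e \<in> carrier_mat (dimv M ?t) (dimv M ?s)" "mp N e \<in> carrier_mat (dimv N ?t) (dimv N ?s)"
     "mp K e \<in> carrier_mat (dimv K ?t) (dimv K ?s)"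
    using f g v e unfolding hom_def is_rep_def by auto
  have cf: "f ?t * mp M e = mp N e * f ?s" and cg: "g ?t * mp N e = mp K e * g ?s"
    using f g e unfolding hom_def by auto
  have "g ?t * f ?t * mp M e = g ?t * (f ?t * mp M e)" using c by simp
  also have "\<dots> = g ?t * (mp N e * f ?s)" using cf by simp
  also have "\<dots> = (g ?t * mp N e) * f ?s" using c by simp
  also have "\<dots> = (mp K e * g ?s) * f ?s" using cg by simp
  also have "\<dots> = mp K e * (g ?s * f ?s)" using c by simp
  finally show "g ?t * f ?t * mp M e = mp K e * (g ?s * f ?s)" .
qed

lemma hom_id:
  assumes fq: "finite_quiver Q" and Y: "is_rep Q Y"
  shows "hom Q Y Y (\<lambda>a. 1\<^sub>m (dimv Y a))"
  unfolding hom_def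
proof (intro conjI ballI)
  fix e assume e: "e \<in> arrs Q"
  then have "mp Y e \<in> carrier_mat (dimv Y (tgt Q e)) (dimv Y (src Q e))" using Y unfolding is_rep_def by auto
  then show "1\<^sub>m (dimv Y (tgt Q e)) * mp Y e = mp Y e * 1\<^sub>m (dimv Y (src Q e))" by simp
qed (use Y in auto)

definition bmap :: "('v \<Rightarrow> 'b set) \<Rightarrow> ('v \<Rightarrow> 'c set) \<Rightarrow> ('b \<Rightarrow> 'c option) \<Rightarrow> 'v \<Rightarrow> 'k::field mat" where
  "bmap B B' \<phi> a = mat (length (enum (B' a))) (length (enum (B a)))
     (\<lambda>(r,t). if \<phi> (enum (B a) ! t) = Some (enum (B' a) ! r) then 1 else 0)"

lemma bmap_hom:
  assumes o1: "srep_ok Q B \<sigma>" and o2: "srep_ok Q B' \<sigma>'"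
    and \<phi>in: "\<And>a x z. a \<in> verts Q \<Longrightarrow> x \<in> B a \<Longrightarrow> \<phi> x = Some z \<Longrightarrow> z \<in> B' a"
    and comm: "\<And>e x. e \<in> arrs Q \<Longrightarrow> x \<in> B (src Q e) \<Longrightarrow> \<phi> (\<sigma> e x) = map_option (\<sigma>' e) (\<phi> x)"
  shows "hom Q (srep Q B \<sigma>) (srep Q B' \<sigma>') (bmap B B' \<phi> :: 'v \<Rightarrow> 'k::field mat)"
  unfolding hom_def
proof (intro conjI ballI)
  show "is_rep Q (srep Q B \<sigma> :: (_,_,'k) rep)" "is_rep Q (srep Q B' \<sigma>' :: (_,_,'k) rep)" by (rule srep_is_rep)+
  fix a assume "a \<in> verts Q"
  show "(bmap B B' \<phi> a :: 'k mat) \<in> carrier_mat (dimv (srep Q B' \<sigma>' :: (_,_,'k) rep) a) (dimv (srep Q B \<sigma> :: (_,_,'k) rep) a)"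
    unfolding bmap_def by simp
next
  fix e assume e: "e \<in> arrs Q"
  let ?s = "src Q e" and ?t = "tgt Q e"
  interpret A: srep_ok Q B \<sigma> by (rule o1)
  interpret B: srep_ok Q B' \<sigma>' by (rule o2)
  have v: "?s \<in> verts Q" "?t \<in> verts Q" using A.st e by auto
  have fs: "finite (B ?s)" "finite (B ?t)" "finite (B' ?s)" "finite (B' ?t)"
    using A.finB B.finB v by auto
  show "(bmap B B' \<phi> ?t :: 'k mat) * mp (srep Q B \<sigma>) e = mp (srep Q B' \<sigma>') e * bmap B B' \<phi> ?s"
  proof (rule eq_matI)
    fix r t assume "r < dim_row (mp (srep Q B' \<sigma>' :: (_,_,'k) rep) e * bmap B B' \<phi> ?s)"
      "t < dim_col (mp (srep Q B' \<sigma>' :: (_,_,'k) rep) e * bmap B B' \<phi> ?s)"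
    then have r: "r < length (enum (B' ?t))" and t: "t < length (enum (B ?s))"
      by (auto simp: srep_def bmap_def)
    let ?x = "enum (B ?s) ! t" and ?y = "enum (B' ?t) ! r"
    have x: "?x \<in> B ?s" using enum_mem[OF fs(1) t] .
    have sx: "\<sigma> e ?x \<in> B ?t" using A.maps[OF e x] .
    note ixp = ix_props[OF fs(2) sx]
    have "((bmap B B' \<phi> ?t :: 'k mat) * mp (srep Q B \<sigma>) e) $$ (r,t) = bmap B B' \<phi> ?t $$ (r, ix (B ?t) (\<sigma> e ?x))"
      by (rule A.mult_mp_entry[OF e _ r t]) (simp add: bmap_def)
    also have "\<dots> = (if \<phi> (\<sigma> e ?x) = Some ?y then 1 else 0)"
      unfolding bmap_def using r ixp by simp
    finally have L: "((bmap B B' \<phi> ?t :: 'k mat) * mp (srep Q B \<sigma>) e) $$ (r,t) = (if map_option (\<sigma>' e) (\<phi> ?x) = Some ?y then 1 else 0)"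
      using comm[OF e x] by simp
    have "(mp (srep Q B' \<sigma>' :: (_,_,'k) rep) e * bmap B B' \<phi> ?s) $$ (r,t)
       = (\<Sum>u\<in>{0..<length (enum (B' ?s))}. mp (srep Q B' \<sigma>' :: (_,_,'k) rep) e $$ (r,u) * bmap B B' \<phi> ?s $$ (u,t))"
      by (rule mat_mult_entry[OF B.mp_carrier _ r t]) (simp add: bmap_def)
    also have "\<dots> = (\<Sum>u\<in>{0..<length (enum (B' ?s))}. if enum (B' ?s) ! u = the (\<phi> ?x) then (if \<phi> ?x \<noteq> None \<and> ?y = \<sigma>' e (the (\<phi> ?x)) then 1 else 0) else 0)"
    proof (rule sum.cong)
      fix u assume "u \<in> {0..<length (enum (B' ?s))}"
      then have u: "u < length (enum (B' ?s))" by simp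
      have "mp (srep Q B' \<sigma>' :: (_,_,'k) rep) e $$ (r,u) = (if ?y = \<sigma>' e (enum (B' ?s) ! u) then 1 else 0)"
        by (rule B.mp_entry[OF e r u])
      moreover have "(bmap B B' \<phi> ?s :: 'k mat) $$ (u,t) = (if \<phi> ?x = Some (enum (B' ?s) ! u) then 1 else 0)"
        unfolding bmap_def using u t by simp
      ultimately show "mp (srep Q B' \<sigma>' :: (_,_,'k) rep) e $$ (r,u) * bmap B B' \<phi> ?s $$ (u,t)
        = (if enum (B' ?s) ! u = the (\<phi> ?x) then (if \<phi> ?x \<noteq> None \<and> ?y = \<sigma>' e (the (\<phi> ?x)) then 1 else 0) else 0)"
        by (cases "\<phi> ?x") auto
    qed simp
    also have "\<dots> = (if the (\<phi> ?x) \<in> B' ?s then (if \<phi> ?x \<noteq> None \<and> ?y = \<sigma>' e (the (\<phi> ?x)) then 1 else 0) else 0)"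
      by (rule sum_enum_delta[OF fs(3)])
    also have "\<dots> = (if map_option (\<sigma>' e) (\<phi> ?x) = Some ?y then 1 else 0)"
      using \<phi>in[OF v(1) x] by (cases "\<phi> ?x") auto
    finally show "((bmap B B' \<phi> ?t :: 'k mat) * mp (srep Q B \<sigma>) e) $$ (r,t) = (mp (srep Q B' \<sigma>' :: (_,_,'k) rep) e * bmap B B' \<phi> ?s) $$ (r,t)"
      using L by simp
  qed (auto simp: srep_def bmap_def)
qed



definition ypath :: "('v,'e,'k::field) rep \<Rightarrow> 'v \<Rightarrow> 'e list \<Rightarrow> 'k mat" where
  "ypath Y b p = foldl (\<lambda>A e. mp Y e * A) (1\<^sub>m (dimv Y b)) p"

lemma ypath_nil[simp]: "ypath Y b [] = 1\<^sub>m (dimv Y b)" unfolding ypath_def by simp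
lemma ypath_snoc[simp]: "ypath Y b (p @ [e]) = mp Y e * ypath Y b p" unfolding ypath_def by simp

lemma ypath_carrier:
  assumes fq: "finite_quiver Q" and Y: "is_rep Q Y"
  shows "is_path Q b a p \<Longrightarrow> ypath Y b p \<in> carrier_mat (dimv Y a) (dimv Y b)"
proof (induction p arbitrary: a rule: rev_induct)
  case Nil then show ?case by (simp add: path_nil)
next
  case (snoc e p)
  from path_snoc_inv[OF fq snoc.prems] have h: "is_path Q b (src Q e) p" "e \<in> arrs Q" "a = tgt Q e" by auto
  have "mp Y e \<in> carrier_mat (dimv Y (tgt Q e)) (dimv Y (src Q e))" using Y h(2) unfolding is_rep_def by auto
  with snoc.IH[OF h(1)] h(3) show ?case by simp
qed

locale projY =
  fixes Q :: "('v,'e) quiver" and Y :: "('v,'e,'k::field) rep"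
  assumes fq: "finite_quiver Q" and ac: "acyclic_quiver Q" and Yr: "is_rep Q Y"
begin

definition Bs :: "'v \<Rightarrow> ('v \<times> nat \<times> 'e list) set" where
  "Bs a = {(b,k,p). b \<in> verts Q \<and> k < dimv Y b \<and> p \<in> paths Q b a}"

definition \<sigma>M :: "'e \<Rightarrow> ('v \<times> nat \<times> 'e list) \<Rightarrow> ('v \<times> nat \<times> 'e list)" where
  "\<sigma>M e x = (case x of (b,k,p) \<Rightarrow> (b,k,p @ [e]))"

definition M :: "('v,'e,'k) rep" where "M = srep Q Bs \<sigma>M"

lemma Bs_finite: "finite (Bs a)"
proof -
  have "Bs a \<subseteq> verts Q \<times> (\<Union>b\<in>verts Q. {..<dimv Y b}) \<times> paths_to Q a"
    unfolding Bs_def paths_to_def paths_def by auto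
  moreover have "finite (verts Q)" using fq unfolding finite_quiver_def by auto
  ultimately show ?thesis using paths_to_finite[OF fq ac]
    by (meson finite_SigmaI finite_UN_I finite_lessThan finite_subset)
qed

lemma M_inj: "srep_inj Q Bs \<sigma>M"
proof
  show "finite_quiver Q" by (rule fq)
  show "\<And>a. finite (Bs a)" by (rule Bs_finite)
  fix e assume e: "e \<in> arrs Q"
  show "inj_on (\<sigma>M e) (Bs (src Q e))" unfolding inj_on_def \<sigma>M_def by auto
  fix x assume "x \<in> Bs (src Q e)"
  then show "\<sigma>M e x \<in> Bs (tgt Q e)" using path_snoc[OF fq _ e] unfolding Bs_def \<sigma>M_def paths_def by auto
qed

interpretation MI: srep_inj Q Bs \<sigma>M by (rule M_inj)

definition gcol :: "'v \<times> nat \<times> 'e list \<Rightarrow> 'k vec" where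
  "gcol x = (case x of (b,k,p) \<Rightarrow> ypath Y b p *\<^sub>v unit_vec (dimv Y b) k)"

definition g :: "'v \<Rightarrow> 'k mat" where
  "g a = mat (dimv Y a) (length (enum (Bs a))) (\<lambda>(r,t). gcol (enum (Bs a) ! t) $ r)"

lemma gcol_dim: assumes "x \<in> Bs a" shows "gcol x \<in> carrier_vec (dimv Y a)"
proof -
  obtain b k p where xe: "x = (b,k,p)" by (cases x) auto
  have "is_path Q b a p" using assms unfolding xe Bs_def paths_def by auto
  from ypath_carrier[OF fq Yr this] have "ypath Y b p \<in> carrier_mat (dimv Y a) (dimv Y b)" .
  then show ?thesis unfolding xe gcol_def by simp
qed

lemma col_g: assumes t: "t < length (enum (Bs a))" shows "col (g a) t = gcol (enum (Bs a) ! t)"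
proof -
  have "gcol (enum (Bs a) ! t) \<in> carrier_vec (dimv Y a)" using gcol_dim[OF enum_mem[OF Bs_finite t]] .
  then show ?thesis by (intro eq_vecI) (use t in \<open>auto simp: g_def\<close>)
qed

lemma g_carrier: "g a \<in> carrier_mat (dimv Y a) (dimv M a)"
  unfolding g_def M_def by simp

lemma g_hom: "hom Q M Y g"
  unfolding hom_def
proof (intro conjI ballI)
  show "is_rep Q M" unfolding M_def by (rule srep_is_rep)
  show "is_rep Q Y" by (rule Yr)
  show "\<And>a. g a \<in> carrier_mat (dimv Y a) (dimv M a)" by (rule g_carrier)
  fix e assume e: "e \<in> arrs Q"
  let ?s = "src Q e" and ?t = "tgt Q e"
  have mY: "mp Y e \<in> carrier_mat (dimv Y ?t) (dimv Y ?s)" using Yr e unfolding is_rep_def by auto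
  show "g ?t * mp M e = mp Y e * g ?s"
  proof (rule eq_matI)
    fix r t assume "r < dim_row (mp Y e * g ?s)" "t < dim_col (mp Y e * g ?s)"
    then have r: "r < dimv Y ?t" and t: "t < length (enum (Bs ?s))" using mY by (auto simp: g_def)
    let ?x = "enum (Bs ?s) ! t"
    have x: "?x \<in> Bs ?s" using enum_mem[OF Bs_finite t] .
    have sx: "\<sigma>M e ?x \<in> Bs ?t" using MI.maps[OF e x] .
    note ixp = ix_props[OF Bs_finite sx]
    obtain b k p where xe: "?x = (b,k,p)" by (cases ?x) auto
    have x': "(b,k,p) \<in> Bs ?s" using x xe by simp
    have bp: "is_path Q b ?s p" "k < dimv Y b" using x' unfolding Bs_def paths_def by auto
    have yc: "ypath Y b p \<in> carrier_mat (dimv Y ?s) (dimv Y b)" using ypath_carrier[OF fq Yr bp(1)] .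
    have "(g ?t * mp M e) $$ (r,t) = g ?t $$ (r, ix (Bs ?t) (\<sigma>M e ?x))"
      unfolding M_def by (rule MI.mult_mp_entry[OF e _ r t]) (simp add: g_def)
    also have "\<dots> = gcol (\<sigma>M e ?x) $ r" unfolding g_def using r ixp by simp
    also have "\<dots> = (mp Y e *\<^sub>v (ypath Y b p *\<^sub>v unit_vec (dimv Y b) k)) $ r"
      unfolding xe \<sigma>M_def gcol_def using mY yc by simp
    also have "\<dots> = (mp Y e *\<^sub>v col (g ?s) t) $ r" using col_g[OF t] unfolding xe gcol_def by simp
    also have "\<dots> = (mp Y e * g ?s) $$ (r,t)"
      by (rule mat_mult_entry_col[symmetric, OF mY _ r t]) (simp add: g_def)
    finally show "(g ?t * mp M e) $$ (r,t) = (mp Y e * g ?s) $$ (r,t)" .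
  qed (use mY in \<open>auto simp: g_def M_def srep_def\<close>)
qed

lemma g_epi: "epi_hom Q M Y g"
  unfolding epi_hom_def
proof (intro conjI ballI)
  show "hom Q M Y g" by (rule g_hom)
  fix a and w :: "'k vec" assume a: "a \<in> verts Q" and w: "w \<in> carrier_vec (dimv Y a)"
  define v :: "'k vec" where "v = vec (length (enum (Bs a))) (\<lambda>t. case enum (Bs a) ! t of (b,k,p) \<Rightarrow> if b = a \<and> p = [] then w $ k else 0)"
  have vc: "v \<in> carrier_vec (dimv M a)" unfolding v_def M_def by simp
  have "g a *\<^sub>v v = w"
  proof (rule eq_vecI)
    fix r assume "r < dim_vec w"
    then have r: "r < dimv Y a" using w by simp
    have "(g a *\<^sub>v v) $ r = (\<Sum>t\<in>{0..<length (enum (Bs a))}. g a $$ (r,t) * v $ t)"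
    proof -
      have gc: "g a \<in> carrier_mat (dimv Y a) (length (enum (Bs a)))" using g_carrier[of a] unfolding M_def by simp
      have vc': "v \<in> carrier_vec (length (enum (Bs a)))" unfolding v_def by simp
      show ?thesis by (rule mat_vec_entry[OF gc vc' r])
    qed
    also have "\<dots> = (\<Sum>t\<in>{0..<length (enum (Bs a))}. if enum (Bs a) ! t = (a,r,[]) then w $ r else 0)"
    proof (rule sum.cong)
      fix t assume "t \<in> {0..<length (enum (Bs a))}"
      then have t: "t < length (enum (Bs a))" by simp
      obtain b k p where xe: "enum (Bs a) ! t = (b,k,p)" by (cases "enum (Bs a) ! t") auto
      have x: "(b,k,p) \<in> Bs a" using enum_mem[OF Bs_finite t] xe by simp
      then have kb: "k < dimv Y b" unfolding Bs_def by auto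
      have "g a $$ (r,t) * v $ t = gcol (b,k,p) $ r * (if b = a \<and> p = [] then w $ k else 0)"
        unfolding g_def v_def using r t xe by simp
      also have "\<dots> = (if (b,k,p) = (a,r,[]) then w $ r else 0)"
        using r kb by (auto simp: gcol_def)
      finally show "g a $$ (r,t) * v $ t = (if enum (Bs a) ! t = (a,r,[]) then w $ r else 0)" using xe by simp
    qed simp
    also have "\<dots> = w $ r"
    proof -
      have "(a,r,[]) \<in> Bs a" using a r unfolding Bs_def paths_def by (simp add: path_nil)
      then show ?thesis using sum_enum_delta[OF Bs_finite, where z="(a,r,[])" and c="\<lambda>_. w $ r"] by simp
    qed
    finally show "(g a *\<^sub>v v) $ r = w $ r" .
  qed (use w g_carrier in \<open>auto\<close>)
  then show "\<exists>v\<in>carrier_vec (dimv M a). g a *\<^sub>v v = w" using vc by blast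
qed

end



lemma mat_mult_zero_vec[simp]: "A \<in> carrier_mat n m \<Longrightarrow> A *\<^sub>v 0\<^sub>v m = 0\<^sub>v n"
  by (intro eq_vecI) auto

lemma vec_nonzero_idx:
  assumes "v \<in> carrier_vec n" "v \<noteq> 0\<^sub>v n"
  shows "\<exists>t<n. v $ t \<noteq> 0"
proof (rule ccontr)
  assume "\<not> ?thesis"
  then have "v = 0\<^sub>v n" using assms(1) by (intro eq_vecI) auto
  then show False using assms(2) by simp
qed

lemma proj_inj:
  assumes fq: "finite_quiver Q" and ac: "acyclic_quiver Q"
  shows "srep_inj Q (paths Q s) (\<lambda>e p. p @ [e])"
proof
  show "finite_quiver Q" by (rule fq)
  show "\<And>a. finite (paths Q s a)" by (rule paths_finite[OF fq ac])
  fix e assume e: "e \<in> arrs Q"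
  show "inj_on (\<lambda>p. p @ [e]) (paths Q s (src Q e))" unfolding inj_on_def by auto
  fix x assume "x \<in> paths Q s (src Q e)"
  then show "x @ [e] \<in> paths Q s (tgt Q e)" using path_snoc[OF fq _ e] unfolding paths_def by auto
qed

context projY
begin

interpretation MI: srep_inj Q Bs \<sigma>M by (rule M_inj)

lemma proj_section:
  assumes "projective Q Y"
  shows "\<exists>l. hom Q Y M l \<and> (\<forall>a\<in>verts Q. g a * l a = 1\<^sub>m (dimv Y a))"
  using assms g_epi hom_id[OF fq Yr] unfolding projective_def by blast

lemma arrow_inj:
  assumes pY: "projective Q Y" and e: "e \<in> arrs Q"
    and y: "y \<in> carrier_vec (dimv Y (src Q e))" and z: "mp Y e *\<^sub>v y = 0\<^sub>v (dimv Y (tgt Q e))"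
  shows "y = 0\<^sub>v (dimv Y (src Q e))"
proof -
  let ?s = "src Q e" and ?t = "tgt Q e"
  obtain l where l: "hom Q Y M l" and gl: "\<forall>a\<in>verts Q. g a * l a = 1\<^sub>m (dimv Y a)" using proj_section[OF pY] by blast
  have v: "?s \<in> verts Q" "?t \<in> verts Q" using fq e unfolding finite_quiver_def by auto
  have lc: "l ?s \<in> carrier_mat (dimv M ?s) (dimv Y ?s)" "l ?t \<in> carrier_mat (dimv M ?t) (dimv Y ?t)"
    using l v unfolding hom_def by auto
  have mY: "mp Y e \<in> carrier_mat (dimv Y ?t) (dimv Y ?s)" using Yr e unfolding is_rep_def by auto
  have mM: "mp M e \<in> carrier_mat (dimv M ?t) (dimv M ?s)" unfolding M_def srep_def by simp
  have comm: "l ?t * mp Y e = mp M e * l ?s" using l e unfolding hom_def by auto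
  have "mp M e *\<^sub>v (l ?s *\<^sub>v y) = (mp M e * l ?s) *\<^sub>v y" using mM lc y by simp
  also have "\<dots> = (l ?t * mp Y e) *\<^sub>v y" using comm by simp
  also have "\<dots> = l ?t *\<^sub>v 0\<^sub>v (dimv Y ?t)" using lc mY y z by simp
  also have "\<dots> = 0\<^sub>v (dimv M ?t)" using lc by simp
  finally have "mp M e *\<^sub>v (l ?s *\<^sub>v y) = 0\<^sub>v (dimv M ?t)" .
  then have "l ?s *\<^sub>v y = 0\<^sub>v (length (enum (Bs ?s)))"
    using MI.mp_inj[OF e, of "l ?s *\<^sub>v y"] lc y unfolding M_def by simp
  then have "(g ?s * l ?s) *\<^sub>v y = 0\<^sub>v (dimv Y ?s)"
    using g_carrier[of ?s] lc y unfolding M_def by simp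
  then show ?thesis using gl v y by simp
qed

lemma to_source:
  assumes pY: "projective Q Y" and i: "i \<in> verts Q"
    and y: "y \<in> carrier_vec (dimv Y i)" and nz: "y \<noteq> 0\<^sub>v (dimv Y i)"
  shows "\<exists>s \<beta>. source Q s \<and> hom Q Y (proj_rep Q s) \<beta> \<and> \<beta> i *\<^sub>v y \<noteq> 0\<^sub>v (dimv (proj_rep Q s :: ('v,'e,'k) rep) i)"
proof -
  obtain l where l: "hom Q Y M l" and gl: "\<forall>a\<in>verts Q. g a * l a = 1\<^sub>m (dimv Y a)" using proj_section[OF pY] by blast
  have lc: "l i \<in> carrier_mat (length (enum (Bs i))) (dimv Y i)"
    using l i unfolding hom_def M_def by auto
  define m where "m = l i *\<^sub>v y"
  have mc: "m \<in> carrier_vec (length (enum (Bs i)))" unfolding m_def using lc y by simp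
  have "m \<noteq> 0\<^sub>v (length (enum (Bs i)))"
  proof
    assume "m = 0\<^sub>v (length (enum (Bs i)))"
    then have "(g i * l i) *\<^sub>v y = 0\<^sub>v (dimv Y i)"
      using g_carrier[of i] lc y unfolding M_def m_def by simp
    then show False using gl i y nz by simp
  qed
  then obtain t where t: "t < length (enum (Bs i))" and mt: "m $ t \<noteq> 0" using vec_nonzero_idx[OF mc] by blast
  obtain b k p where xe: "enum (Bs i) ! t = (b,k,p)" by (cases "enum (Bs i) ! t") auto
  have x: "(b,k,p) \<in> Bs i" using enum_mem[OF Bs_finite t] xe by simp
  then have b: "b \<in> verts Q" and p: "is_path Q b i p" unfolding Bs_def paths_def by auto
  obtain s q where s: "source Q s" and q: "is_path Q s b q" using source_exists[OF fq ac b] by blast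
  define \<phi> where "\<phi> = (\<lambda>(b',k',p'::'e list). if b' = b \<and> k' = k then Some (q @ p') else None)"
  define \<gamma> :: "'v \<Rightarrow> 'k mat" where "\<gamma> = bmap Bs (paths Q s) \<phi>"
  have okM: "srep_ok Q Bs \<sigma>M" using M_inj srep_inj.axioms(1) by blast
  have okP: "srep_ok Q (paths Q s) (\<lambda>e p. p @ [e])" using proj_inj[OF fq ac] srep_inj.axioms(1) by blast
  have \<gamma>hom: "hom Q M (proj_rep Q s) \<gamma>"
    unfolding M_def proj_rep_srep \<gamma>_def
  proof (rule bmap_hom[OF okM okP])
    fix a x z assume "a \<in> verts Q" "x \<in> Bs a" "\<phi> x = Some z"
    then show "z \<in> paths Q s a" using path_append[OF fq q]
      unfolding \<phi>_def Bs_def paths_def by (auto split: if_splits)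
  next
    fix e x assume "e \<in> arrs Q" "x \<in> Bs (src Q e)"
    show "\<phi> (\<sigma>M e x) = map_option (\<lambda>p. p @ [e]) (\<phi> x)"
      unfolding \<phi>_def \<sigma>M_def by (cases x) auto
  qed
  define \<beta> where "\<beta> = comp_hom \<gamma> l"
  have \<beta>hom: "hom Q Y (proj_rep Q s) \<beta>" unfolding \<beta>_def by (rule hom_comp[OF fq l \<gamma>hom])
  have qp: "q @ p \<in> paths Q s i" using path_append[OF fq q p] unfolding paths_def by simp
  have fP: "finite (paths Q s i)" by (rule paths_finite[OF fq ac])
  note ixp = ix_props[OF fP qp]
  have \<gamma>c: "\<gamma> i \<in> carrier_mat (length (enum (paths Q s i))) (length (enum (Bs i)))"
    unfolding \<gamma>_def bmap_def by simp
  have "(\<gamma> i *\<^sub>v m) $ ix (paths Q s i) (q @ p) = (\<Sum>u\<in>{0..<length (enum (Bs i))}. \<gamma> i $$ (ix (paths Q s i) (q @ p), u) * m $ u)"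
    by (rule mat_vec_entry[OF \<gamma>c mc]) (use ixp in simp)
  also have "\<dots> = (\<Sum>u\<in>{0..<length (enum (Bs i))}. if enum (Bs i) ! u = (b,k,p) then m $ u else 0)"
  proof (rule sum.cong)
    fix u assume "u \<in> {0..<length (enum (Bs i))}"
    then have u: "u < length (enum (Bs i))" by simp
    have "\<gamma> i $$ (ix (paths Q s i) (q @ p), u) = (if \<phi> (enum (Bs i) ! u) = Some (q @ p) then 1 else 0)"
      unfolding \<gamma>_def bmap_def using u ixp by simp
    moreover have "\<phi> (enum (Bs i) ! u) = Some (q @ p) \<longleftrightarrow> enum (Bs i) ! u = (b,k,p)"
      unfolding \<phi>_def by (cases "enum (Bs i) ! u") auto
    ultimately show "\<gamma> i $$ (ix (paths Q s i) (q @ p), u) * m $ u = (if enum (Bs i) ! u = (b,k,p) then m $ u else 0)"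
      by simp
  qed simp
  also have "\<dots> = m $ ix (Bs i) (b,k,p)"
    using sum_enum_delta[OF Bs_finite, where z="(b,k,p)" and c="\<lambda>u. m $ u"] x by simp
  also have "ix (Bs i) (b,k,p) = t" using enum_nth_eq[OF Bs_finite t, of "(b,k,p)"] xe by simp
  finally have ne: "(\<gamma> i *\<^sub>v m) $ ix (paths Q s i) (q @ p) \<noteq> 0" using mt by simp
  have "\<beta> i *\<^sub>v y = \<gamma> i *\<^sub>v m" unfolding \<beta>_def comp_hom_def m_def using \<gamma>c lc y by simp
  then have "\<beta> i *\<^sub>v y \<noteq> 0\<^sub>v (dimv (proj_rep Q s :: ('v,'e,'k) rep) i)"
    using ne ixp unfolding proj_rep_srep by auto
  then show ?thesis using s \<beta>hom by blast
qed

end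



lemma mat_nonzero_vec:
  assumes A: "(A :: 'a::field mat) \<in> carrier_mat n m" and nz: "A \<noteq> 0\<^sub>m n m"
  shows "\<exists>x\<in>carrier_vec m. A *\<^sub>v x \<noteq> 0\<^sub>v n"
proof -
  have "\<exists>r c. r < n \<and> c < m \<and> A $$ (r,c) \<noteq> 0"
  proof (rule ccontr)
    assume h: "\<not> (\<exists>r c. r < n \<and> c < m \<and> A $$ (r,c) \<noteq> 0)"
    have "A = 0\<^sub>m n m"
    proof (rule eq_matI)
      fix r c assume "r < dim_row (0\<^sub>m n m :: 'a mat)" "c < dim_col (0\<^sub>m n m :: 'a mat)"
      then show "A $$ (r,c) = 0\<^sub>m n m $$ (r,c)" using h by auto
    qed (use A in auto)
    then show False using nz by simp
  qed
  then obtain r c where rc: "r < n" "c < m" "A $$ (r,c) \<noteq> 0" by blast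
  have e1: "(A *\<^sub>v unit_vec m c) $ r = A $$ (r,c)" using A rc(1,2) by simp
  have "A *\<^sub>v unit_vec m c \<noteq> 0\<^sub>v n"
  proof
    assume "A *\<^sub>v unit_vec m c = 0\<^sub>v n"
    then have "(A *\<^sub>v unit_vec m c) $ r = 0" using rc(1) by simp
    then show False using e1 rc(3) by simp
  qed
  then show ?thesis using unit_vec_carrier by blast
qed

lemma length_enum: assumes "finite S" shows "length (enum S) = card S"
proof -
  have d: "distinct (enum S)" and st: "set (enum S) = S" using enum_props[OF assms] by auto
  show ?thesis using distinct_card[OF d] st by simp
qed

lemma sink_paths:
  assumes "sink Q i" shows "paths Q i a = (if a = i then {[]} else {})"
proof -
  have iv: "i \<in> verts Q" using assms unfolding sink_def by simp
  have "p \<in> paths Q i a \<longleftrightarrow> p \<in> (if a = i then {[]} else {})" for p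
  proof
    assume "p \<in> paths Q i a"
    then have "p = [] \<and> a = i" using path_sink[OF assms] unfolding paths_def by blast
    then show "p \<in> (if a = i then {[]} else {})" by simp
  next
    assume "p \<in> (if a = i then {[]} else {})"
    then have "p = [] \<and> a = i" by (simp split: if_splits)
    then show "p \<in> paths Q i a" using iv unfolding paths_def by (simp add: path_nil)
  qed
  then show ?thesis by blast
qed

lemma sink_dim:
  assumes "sink Q i" shows "dimv (proj_rep Q i :: ('v,'e,'k::field) rep) a = (if a = i then 1 else 0)"
proof -
  have "dimv (proj_rep Q i :: ('v,'e,'k::field) rep) a = length (enum (paths Q i a))"
    unfolding proj_rep_srep by simp
  also have "\<dots> = card (paths Q i a)"
    by (rule length_enum) (simp add: sink_paths[OF assms])
  also have "\<dots> = (if a = i then 1 else 0)" by (simp add: sink_paths[OF assms])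
  finally show ?thesis .
qed


lemma walk_to_sink:
  assumes fq: "finite_quiver Q" and ac: "acyclic_quiver Q" and pY: "projective Q Y"
    and f: "hom Q X Y f"
  shows "a \<in> verts Q \<Longrightarrow> x \<in> carrier_vec (dimv X a) \<Longrightarrow> f a *\<^sub>v x \<noteq> 0\<^sub>v (dimv Y a) \<Longrightarrow>
     \<exists>i x'. sink Q i \<and> x' \<in> carrier_vec (dimv X i) \<and> f i *\<^sub>v x' \<noteq> 0\<^sub>v (dimv Y i)"
proof (induction a arbitrary: x rule: wf_induct_rule[OF arel_wf(2)[OF fq ac]])
  case (1 a)
  show ?case
  proof (cases "sink Q a")
    case True then show ?thesis using 1 by blast
  next
    case False
    then obtain e where e: "e \<in> arrs Q" "src Q e = a" using 1 unfolding sink_def by auto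
    let ?t = "tgt Q e"
    have tv: "?t \<in> verts Q" using fq e unfolding finite_quiver_def by auto
    have rel: "(?t, a) \<in> (arel Q)\<inverse>" using e unfolding arel_def by auto
    have Yr: "is_rep Q Y" using pY unfolding projective_def by auto
    interpret PY: projY Q Y by unfold_locales (use fq ac Yr in auto)
    have mX: "mp X e \<in> carrier_mat (dimv X ?t) (dimv X a)" and mY: "mp Y e \<in> carrier_mat (dimv Y ?t) (dimv Y a)"
      using f e unfolding hom_def is_rep_def by auto
    have fa: "f a \<in> carrier_mat (dimv Y a) (dimv X a)" and ft: "f ?t \<in> carrier_mat (dimv Y ?t) (dimv X ?t)"
      using f 1(2) tv unfolding hom_def by auto
    have comm: "f ?t * mp X e = mp Y e * f a" using f e unfolding hom_def by auto
    define x' where "x' = mp X e *\<^sub>v x"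
    have x'c: "x' \<in> carrier_vec (dimv X ?t)" unfolding x'_def using mX 1(3) by simp
    have "f ?t *\<^sub>v x' = (f ?t * mp X e) *\<^sub>v x" unfolding x'_def using ft mX 1(3) by simp
    also have "\<dots> = mp Y e *\<^sub>v (f a *\<^sub>v x)" using comm mY fa 1(3) by simp
    finally have eq: "f ?t *\<^sub>v x' = mp Y e *\<^sub>v (f a *\<^sub>v x)" .
    have "f ?t *\<^sub>v x' \<noteq> 0\<^sub>v (dimv Y ?t)"
    proof
      assume "f ?t *\<^sub>v x' = 0\<^sub>v (dimv Y ?t)"
      then have "f a *\<^sub>v x = 0\<^sub>v (dimv Y a)"
        using PY.arrow_inj[OF pY e(1), of "f a *\<^sub>v x"] eq e(2) fa 1(3) by simp
      then show False using 1(4) by simp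
    qed
    then show ?thesis using 1(1)[OF rel tv x'c] by blast
  qed
qed



theorem lemma5p6:
  fixes Q :: "('v,'e) quiver"
    and X Y :: "('v,'e,'k::field) rep"
    and f :: "'v \<Rightarrow> 'k mat"
  assumes "alg_closed TYPE('k)" and "finite_quiver Q" and "acyclic_quiver Q"
    and "rep_finite TYPE('k) Q"
    and "projective Q X" and "projective Q Y"
    and "hom Q X Y f" and "nonzero_hom Q X Y f"
  shows "\<exists>i j \<alpha> \<beta>. sink Q i \<and> source Q j \<and>
           hom Q (proj_rep Q i) X \<alpha> \<and> hom Q Y (proj_rep Q j) \<beta> \<and>
           nonzero_hom Q (proj_rep Q i) (proj_rep Q j) (comp_hom \<beta> (comp_hom f \<alpha>)) \<and>
           mono_hom Q (proj_rep Q i) (proj_rep Q j) (comp_hom \<beta> (comp_hom f \<alpha>))"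
proof -
  note fq = assms(2) and ac = assms(3) and pX = assms(5) and pY = assms(6) and fh = assms(7)
  have Xr: "is_rep Q X" using pX unfolding projective_def by auto
  have Yr: "is_rep Q Y" using pY unfolding projective_def by auto
  interpret PY: projY Q Y by unfold_locales (use fq ac Yr in auto)
  obtain a0 where a0: "a0 \<in> verts Q" and fa0: "f a0 \<noteq> 0\<^sub>m (dimv Y a0) (dimv X a0)"
    using assms(8) unfolding nonzero_hom_def by blast
  have fa0c: "f a0 \<in> carrier_mat (dimv Y a0) (dimv X a0)" using fh a0 unfolding hom_def by auto
  obtain x0 where x0: "x0 \<in> carrier_vec (dimv X a0)" "f a0 *\<^sub>v x0 \<noteq> 0\<^sub>v (dimv Y a0)"
    using mat_nonzero_vec[OF fa0c fa0] by blast
  obtain i x where si: "sink Q i" and xc: "x \<in> carrier_vec (dimv X i)" and fx: "f i *\<^sub>v x \<noteq> 0\<^sub>v (dimv Y i)"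
    using walk_to_sink[OF fq ac pY fh a0 x0] by blast
  have iv: "i \<in> verts Q" using si unfolding sink_def by simp
  have fic: "f i \<in> carrier_mat (dimv Y i) (dimv X i)" using fh iv unfolding hom_def by auto
  define y where "y = f i *\<^sub>v x"
  have yc: "y \<in> carrier_vec (dimv Y i)" unfolding y_def using fic xc by simp
  obtain s \<beta> where ss: "source Q s" and \<beta>h: "hom Q Y (proj_rep Q s) \<beta>"
    and \<beta>y: "\<beta> i *\<^sub>v y \<noteq> 0\<^sub>v (dimv (proj_rep Q s :: ('v,'e,'k) rep) i)"
    using PY.to_source[OF pY iv yc fx[folded y_def]] by blast
  let ?P = "proj_rep Q i :: ('v,'e,'k) rep"
  let ?S = "proj_rep Q s :: ('v,'e,'k) rep"
  note dP = sink_dim[OF si, where 'k='k]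
  define \<alpha> :: "'v \<Rightarrow> 'k mat" where "\<alpha> = (\<lambda>a. mat (dimv X a) (dimv ?P a) (\<lambda>(r,c). if a = i then x $ r else 0))"
  have \<alpha>h: "hom Q ?P X \<alpha>"
    unfolding hom_def
  proof (intro conjI ballI)
    show "is_rep Q ?P" unfolding proj_rep_srep by (rule srep_is_rep)
    show "is_rep Q X" by (rule Xr)
    fix a show "\<alpha> a \<in> carrier_mat (dimv X a) (dimv ?P a)" unfolding \<alpha>_def by simp
  next
    fix e assume e: "e \<in> arrs Q"
    have ns: "src Q e \<noteq> i" using si e unfolding sink_def by auto
    have mP: "mp ?P e \<in> carrier_mat (dimv ?P (tgt Q e)) (dimv ?P (src Q e))"
      unfolding proj_rep_srep srep_def by simp
    have mX: "mp X e \<in> carrier_mat (dimv X (tgt Q e)) (dimv X (src Q e))" using Xr e unfolding is_rep_def by auto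
    have z: "dimv ?P (src Q e) = 0" using dP ns by simp
    show "\<alpha> (tgt Q e) * mp ?P e = mp X e * \<alpha> (src Q e)"
      by (rule eq_matI) (use mP mX z in \<open>auto simp: \<alpha>_def\<close>)
  qed
  define C where "C = comp_hom \<beta> (comp_hom f \<alpha>)"
  have Ch: "hom Q ?P ?S C" unfolding C_def
    by (rule hom_comp[OF fq hom_comp[OF fq \<alpha>h fh] \<beta>h])
  have \<beta>c: "\<beta> i \<in> carrier_mat (dimv ?S i) (dimv Y i)" using \<beta>h iv unfolding hom_def by auto
  have \<alpha>c: "\<alpha> i \<in> carrier_mat (dimv X i) 1" unfolding \<alpha>_def using dP by simp
  have key: "C i *\<^sub>v v = (v $ 0) \<cdot>\<^sub>v (\<beta> i *\<^sub>v y)" if v: "v \<in> carrier_vec 1" for v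
  proof -
    have av: "\<alpha> i *\<^sub>v v = (v $ 0) \<cdot>\<^sub>v x"
    proof (rule eq_vecI)
      fix r assume "r < dim_vec ((v $ 0) \<cdot>\<^sub>v x)"
      then have r: "r < dimv X i" using xc by simp
      have "(\<alpha> i *\<^sub>v v) $ r = (\<Sum>u\<in>{0..<1}. \<alpha> i $$ (r,u) * v $ u)"
        by (rule mat_vec_entry[OF \<alpha>c v r])
      also have "\<dots> = x $ r * v $ 0" unfolding \<alpha>_def using r dP by simp
      finally show "(\<alpha> i *\<^sub>v v) $ r = ((v $ 0) \<cdot>\<^sub>v x) $ r" using r xc by simp
    qed (use \<alpha>c xc in simp)
    have "C i *\<^sub>v v = \<beta> i *\<^sub>v (f i *\<^sub>v (\<alpha> i *\<^sub>v v))"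
    proof -
      have fa: "f i * \<alpha> i \<in> carrier_mat (dimv Y i) 1" using fic \<alpha>c by simp
      have "C i *\<^sub>v v = \<beta> i *\<^sub>v ((f i * \<alpha> i) *\<^sub>v v)"
        unfolding C_def comp_hom_def by (rule assoc_mult_mat_vec[OF \<beta>c fa v])
      also have "(f i * \<alpha> i) *\<^sub>v v = f i *\<^sub>v (\<alpha> i *\<^sub>v v)" by (rule assoc_mult_mat_vec[OF fic \<alpha>c v])
      finally show ?thesis .
    qed
    also have "\<dots> = \<beta> i *\<^sub>v (f i *\<^sub>v ((v $ 0) \<cdot>\<^sub>v x))" using av by simp
    also have "\<dots> = (v $ 0) \<cdot>\<^sub>v (\<beta> i *\<^sub>v y)"
      unfolding y_def using mult_mat_vec[OF fic xc] mult_mat_vec[OF \<beta>c] fic xc by simp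
    finally show ?thesis .
  qed
  have byc: "\<beta> i *\<^sub>v y \<in> carrier_vec (dimv ?S i)" using \<beta>c yc by simp
  obtain t where t: "t < dimv ?S i" "(\<beta> i *\<^sub>v y) $ t \<noteq> 0" using vec_nonzero_idx[OF byc \<beta>y] by blast
  have mono: "\<forall>a\<in>verts Q. \<forall>v\<in>carrier_vec (dimv ?P a). C a *\<^sub>v v = 0\<^sub>v (dimv ?S a) \<longrightarrow> v = 0\<^sub>v (dimv ?P a)"
  proof (intro ballI impI)
    fix a v assume a: "a \<in> verts Q" and v: "v \<in> carrier_vec (dimv ?P a)" and z: "C a *\<^sub>v v = 0\<^sub>v (dimv ?S a)"
    show "v = 0\<^sub>v (dimv ?P a)"
    proof (cases "a = i")
      case False
      then have "dim_vec v = 0" using v dP by simp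
      then show ?thesis using False dP by simp
    next
      case True
      then have v1: "v \<in> carrier_vec 1" using v dP by simp
      have "((v $ 0) \<cdot>\<^sub>v (\<beta> i *\<^sub>v y)) $ t = 0" using key[OF v1] z True t(1) by simp
      then have "v $ 0 = 0" using t(2) t(1) \<beta>c by simp
      then show ?thesis using v1 True dP by (intro eq_vecI) auto
    qed
  qed
  have nz: "nonzero_hom Q ?P ?S C"
    unfolding nonzero_hom_def
  proof (intro bexI[OF _ iv])
    show "C i \<noteq> 0\<^sub>m (dimv ?S i) (dimv ?P i)"
    proof
      assume h: "C i = 0\<^sub>m (dimv ?S i) (dimv ?P i)"
      have u: "unit_vec 1 0 \<in> carrier_vec 1" by simp
      have "C i *\<^sub>v unit_vec 1 0 = 0\<^sub>v (dimv ?S i)" 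
      proof -
        have dPi: "dimv ?P i = 1" using dP by simp
        show ?thesis unfolding h dPi by (intro eq_vecI) (auto simp: scalar_prod_def)
      qed
      then have "\<beta> i *\<^sub>v y = 0\<^sub>v (dimv ?S i)" using key[OF u] by simp
      then show False using \<beta>y by simp
    qed
  qed
  show ?thesis
    using si ss \<alpha>h \<beta>h nz Ch mono unfolding C_def mono_hom_def by blast
qed


end
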